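(* Let $\mathcal{H}$ be a complex Hilbert space and let $A,B,X\in\mathcal{B}(\mathcal{H})$ be such that $A$, $X$, $X^{*}$, $B$ pairwise commute, $A$ is positive and invertible, and $M=\begin{pmatrix} A & X\\ X^{*} & B\end{pmatrix}\in\mathcal{B}(\mathcal{H}\oplus\mathcal{H})$ is positive. Assume $\det M:=AB-X^{*}X=0$. Then, with $\operatorname{tr}M:=A+B$, $$\sqrt{M}=\begin{pmatrix} (\operatorname{tr}M)^{-1/2} & 0\\ 0 & (\operatorname{tr}M)^{-1/2}\end{pmatrix}\begin{pmatrix} A & X\\ X^{*} & B\end{pmatrix}.$$
   Context: $\sqrt{M}$ denotes the positive square root of $M$; $\operatorname{tr}M$ is positive and invertible since it dominates $A$. *)

theory Defs
  imports "HOL-Analysis.Analysis"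
begin

text \<open>A complex Hilbert space, presented as a real Hilbert space (real inner product,
  complete) together with a complex scalar multiplication extending the real one, such that
  multiplication by the imaginary unit is an isometry.  The complex inner product is then
  recovered by cinner below (conjugate-linear in the first, linear in the second argument).\<close>

class complex_hilbert = real_inner + complete_space +
  fixes cscale :: "complex \<Rightarrow> 'a \<Rightarrow> 'a"
  assumes cscale_add_right: "cscale a (x + y) = cscale a x + cscale a y"
    and cscale_add_left: "cscale (a + b) x = cscale a x + cscale b x"
    and cscale_cscale: "cscale a (cscale b x) = cscale (a * b) x"
    and cscale_of_real: "cscale (complex_of_real r) x = scaleR r x"
    and inner_cscale_ii: "inner (cscale \<i> x) (cscale \<i> y) = inner x y"

definition cinner :: "'a::complex_hilbert \<Rightarrow> 'a \<Rightarrow> complex" where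
  "cinner x y = Complex (inner x y) (- inner x (cscale \<i> y))"

instantiation prod :: (complex_hilbert, complex_hilbert) complex_hilbert
begin
definition cscale_prod_def: "cscale c p = (cscale c (fst p), cscale c (snd p))"
instance
  by standard (auto simp: cscale_prod_def inner_prod_def cscale_add_right cscale_add_left
      cscale_cscale cscale_of_real inner_cscale_ii)
end

definition bounded_op :: "('a::complex_hilbert \<Rightarrow> 'a) \<Rightarrow> bool" where
  "bounded_op T \<longleftrightarrow> bounded_linear T \<and> (\<forall>c x. T (cscale c x) = cscale c (T x))"

definition is_adjoint :: "('a::complex_hilbert \<Rightarrow> 'a) \<Rightarrow> ('a \<Rightarrow> 'a) \<Rightarrow> bool" where
  "is_adjoint T S \<longleftrightarrow> bounded_op T \<and> bounded_op S \<and> (\<forall>x y. cinner (T x) y = cinner x (S y))"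

definition positive_op :: "('a::complex_hilbert \<Rightarrow> 'a) \<Rightarrow> bool" where
  "positive_op T \<longleftrightarrow> bounded_op T \<and> (\<forall>x. Im (cinner x (T x)) = 0 \<and> Re (cinner x (T x)) \<ge> 0)"

definition invertible_op :: "('a::complex_hilbert \<Rightarrow> 'a) \<Rightarrow> bool" where
  "invertible_op T \<longleftrightarrow> bounded_op T \<and> (\<exists>S. bounded_op S \<and> S \<circ> T = id \<and> T \<circ> S = id)"

definition op_sqrt :: "('a::complex_hilbert \<Rightarrow> 'a) \<Rightarrow> ('a \<Rightarrow> 'a)" where
  "op_sqrt T = (THE S. positive_op S \<and> S \<circ> S = T)"

definition block :: "('a \<Rightarrow> 'a) \<Rightarrow> ('a \<Rightarrow> 'a) \<Rightarrow> ('a \<Rightarrow> 'a) \<Rightarrow> ('a \<Rightarrow> 'a) \<Rightarrow> ('a::complex_hilbert \<times> 'a \<Rightarrow> 'a \<times> 'a)" where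
  "block P Q R S = (\<lambda>(x, y). (P x + Q y, R x + S y))"

end

theory Submission
  imports Defs "HOL-Analysis.Generalised_Binomial_Theorem" "HOL-Computational_Algebra.Formal_Power_Series"
begin


lemma cscale_ii: "cscale \<i> (cscale \<i> x) = - (x::'a::complex_hilbert)"
  using cscale_cscale[of \<i> \<i> x] cscale_of_real[of "-1" x] by simp

lemma inner_cscale_left: "inner (cscale \<i> x) y = - inner x (cscale \<i> (y::'a::complex_hilbert))"
  using inner_cscale_ii[of x "cscale \<i> y"] by (simp add: cscale_ii)

lemma cscale_zero[simp]: "cscale c (0::'a::complex_hilbert) = 0"
  using cscale_add_right[of c 0 0] by simp

lemma cscale_minus: "cscale c (- x) = - cscale c (x::'a::complex_hilbert)"
  using cscale_add_right[of c x "-x"] by (simp add: eq_neg_iff_add_eq_0 add.commute)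

lemma cscale_diff: "cscale c (x - y) = cscale c x - cscale c (y::'a::complex_hilbert)"
  using cscale_add_right[of c x "-y"] by (simp add: cscale_minus)

lemma cscale_scaleR: "cscale c (r *\<^sub>R x) = r *\<^sub>R cscale c (x::'a::complex_hilbert)"
  by (metis cscale_cscale cscale_of_real mult.commute)

definition sa :: "('a::real_inner \<Rightarrow> 'a) \<Rightarrow> bool" where
  "sa T \<longleftrightarrow> (\<forall>x y. inner (T x) y = inner x (T y))"

lemma Im_cinner: "Im (cinner x y) = - inner x (cscale \<i> y)"
  by (simp add: cinner_def)
lemma Re_cinner: "Re (cinner x y) = inner x y"
  by (simp add: cinner_def)

lemma positive_op_iff:
  "positive_op T \<longleftrightarrow> bounded_op T \<and> sa T \<and> (\<forall>x. 0 \<le> inner x (T x))"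
proof
  assume p: "positive_op T"
  then have b: "bounded_op T" and lin: "bounded_linear T" and c: "\<And>c x. T (cscale c x) = cscale c (T x)"
    by (auto simp: positive_op_def bounded_op_def)
  have z: "\<And>x. inner x (cscale \<i> (T x)) = 0" using p by (auto simp: positive_op_def Im_cinner)
  have nn: "\<And>x. 0 \<le> inner x (T x)" using p by (auto simp: positive_op_def Re_cinner)
  have add: "T (x + y) = T x + T y" for x y using lin by (simp add: linear_simps)
  have pol: "inner x (cscale \<i> (T y)) + inner y (cscale \<i> (T x)) = 0" for x y
  proof -
    have "0 = inner (x + y) (cscale \<i> (T (x + y)))" using z by simp
    also have "\<dots> = inner x (cscale \<i> (T x)) + inner x (cscale \<i> (T y)) + inner y (cscale \<i> (T x)) + inner y (cscale \<i> (T y))"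
      by (simp add: add cscale_add_right inner_add_left inner_add_right)
    finally show ?thesis using z by simp
  qed
  have "sa T"
    unfolding sa_def
  proof (intro allI)
    fix x y
    have "inner x (cscale \<i> (T (cscale \<i> y))) + inner (cscale \<i> y) (cscale \<i> (T x)) = 0" by (rule pol)
    then have "- inner x (T y) + inner y (T x) = 0"
      by (simp add: c cscale_ii inner_cscale_ii)
    then show "inner (T x) y = inner x (T y)" by (simp add: inner_commute)
  qed
  then show "bounded_op T \<and> sa T \<and> (\<forall>x. 0 \<le> inner x (T x))" using b nn by auto
next
  assume h: "bounded_op T \<and> sa T \<and> (\<forall>x. 0 \<le> inner x (T x))"
  then have c: "\<And>c x. T (cscale c x) = cscale c (T x)" by (auto simp: bounded_op_def)
  have "inner x (cscale \<i> (T x)) = 0" for x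
  proof -
    have "inner x (cscale \<i> (T x)) = inner x (T (cscale \<i> x))" by (simp add: c)
    also have "\<dots> = inner (T x) (cscale \<i> x)" using h by (simp add: sa_def)
    also have "\<dots> = inner (cscale \<i> x) (T x)" by (simp add: inner_commute)
    also have "\<dots> = - inner x (cscale \<i> (T x))" by (simp add: inner_cscale_left)
    finally show ?thesis by simp
  qed
  then show "positive_op T" using h by (auto simp: positive_op_def Im_cinner Re_cinner)
qed



lemma cs_bound:
  fixes S :: "'a::real_inner \<Rightarrow> 'a"
  assumes bl: "bounded_linear S" and s: "sa S" and nn: "\<forall>w. 0 \<le> inner w (S w)"
  shows "\<exists>L>0. \<forall>v. (norm (S v))\<^sup>2 \<le> L * inner v (S v)"
proof -
  obtain K where K: "K>0" "\<forall>x. norm (S x) \<le> norm x * K"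
    using bounded_linear.pos_bounded[OF bl] by blast
  have up: "inner w (S w) \<le> K * (norm w)\<^sup>2" for w
  proof -
    have "inner w (S w) \<le> norm w * norm (S w)" by (rule norm_cauchy_schwarz)
    also have "\<dots> \<le> norm w * (norm w * K)" using K by (simp add: mult_left_mono)
    finally show ?thesis by (simp add: power2_eq_square algebra_simps)
  qed
  show ?thesis
  proof (intro exI[of _ K] conjI allI)
    fix v
    define u where "u = S v"
    define t where "t = 1/K"
    have lin: "S (v - t *\<^sub>R u) = S v - t *\<^sub>R S u"
      using bl by (simp add: linear_simps)
    have uS: "S v = u" by (simp add: u_def)
    have e1: "inner v (S u) = inner u u" using s unfolding sa_def uS[symmetric] by metis
    have "0 \<le> inner (v - t *\<^sub>R u) (S (v - t *\<^sub>R u))" using nn by blast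
    also have "\<dots> = inner v (S v) - 2 * t * inner u u + t\<^sup>2 * inner u (S u)"
      unfolding lin uS by (simp add: inner_diff_left inner_diff_right e1 inner_commute[of u v] power2_eq_square algebra_simps)
    also have "\<dots> \<le> inner v (S v) - 2 * t * inner u u + t\<^sup>2 * (K * (norm u)\<^sup>2)"
      using up[of u] by (simp add: mult_left_mono)
    also have "\<dots> = inner v (S v) - (norm u)\<^sup>2 / K"
      using K by (simp add: t_def power2_norm_eq_inner[symmetric]) (simp add: power2_eq_square field_simps)
    finally show "(norm (S v))\<^sup>2 \<le> K * inner v (S v)"
      using K by (simp add: u_def field_simps)
  qed (use K in auto)
qed

lemma sqrt_unique:
  fixes S T :: "'a::real_inner \<Rightarrow> 'a"
  assumes blS: "bounded_linear S" and blT: "bounded_linear T"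
    and sS: "sa S" and sT: "sa T"
    and nS: "\<forall>w. 0 \<le> inner w (S w)" and nT: "\<forall>w. 0 \<le> inner w (T w)"
    and sq: "\<And>x. S (S x) = T (T x)"
  shows "S = T"
proof (rule ccontr)
  assume ne: "S \<noteq> T"
  define D where "D x = S x - T x" for x
  define K where "K x = S x + T x" for x
  have blD: "bounded_linear D" unfolding D_def using blS blT by (intro bounded_linear_sub)
  have blK: "bounded_linear K" unfolding K_def using blS blT by (intro bounded_linear_add)
  have sD: "sa D" using sS sT by (simp add: sa_def D_def inner_diff_left inner_diff_right)
  have sK: "sa K" using sS sT by (simp add: sa_def K_def inner_add_left inner_add_right)
  have nK: "0 \<le> inner w (K w)" for w using nS nT by (simp add: K_def inner_add_right add_nonneg_nonneg)
  have anti: "K (D x) = - D (K x)" for x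
  proof -
    have h1: "K (D x) = S (S x) - S (T x) + (T (S x) - T (T x))"
      using blS blT by (simp add: K_def D_def linear_simps)
    have h2: "D (K x) = S (S x) + S (T x) - (T (S x) + T (T x))"
      using blS blT by (simp add: K_def D_def linear_simps)
    show ?thesis unfolding h1 h2 sq[of x] by (simp add: algebra_simps)
  qed
  obtain LS where LS: "LS > 0" "\<forall>v. (norm (S v))\<^sup>2 \<le> LS * inner v (S v)"
    using cs_bound[OF blS sS nS] by blast
  obtain LT where LT: "LT > 0" "\<forall>v. (norm (T v))\<^sup>2 \<le> LT * inner v (T v)"
    using cs_bound[OF blT sT nT] by blast
  obtain LK where LK: "LK > 0" "\<forall>x. norm (K x) \<le> norm x * LK"
    using bounded_linear.pos_bounded[OF blK] by blast
  define L where "L = max LS LT"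
  have L: "L > 0" using LS LT by (simp add: L_def)
  define \<nu> where "\<nu> = onorm D"
  have Dle: "norm (D x) \<le> \<nu> * norm x" for x unfolding \<nu>_def by (rule onorm[OF blD])
  obtain x0 where "D x0 \<noteq> 0" using ne by (auto simp: D_def fun_eq_iff)
  then have \<nu>pos: "\<nu> > 0" unfolding \<nu>_def using onorm_pos_lt[OF blD] by blast
  define \<mu> where "\<mu> = \<nu>\<^sup>2"
  have \<mu>pos: "\<mu> > 0" using \<nu>pos by (simp add: \<mu>_def)
  define C where "C = 4 * L\<^sup>2 * LK\<^sup>2"
  have Cpos: "C > 0" using L LK by (simp add: C_def)
  define \<delta> where "\<delta> = min (\<nu>/2) (\<mu>^3 / (64 * C * \<nu>))"
  have \<delta>pos: "\<delta> > 0" using \<nu>pos \<mu>pos Cpos by (simp add: \<delta>_def)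
  have "\<exists>v. norm (D v) > (\<nu> - \<delta>) * norm v"
  proof (rule ccontr)
    assume "\<not> ?thesis"
    then have "\<forall>v. norm (D v) \<le> (\<nu> - \<delta>) * norm v" by (simp add: not_less)
    then have "onorm D \<le> \<nu> - \<delta>" 
      using \<delta>pos by (intro onorm_bound) (auto simp: \<delta>_def)
    then show False using \<delta>pos by (simp add: \<nu>_def)
  qed
  then obtain v where v: "norm (D v) > (\<nu> - \<delta>) * norm v" by blast
  have "v \<noteq> 0" using v blD by (auto simp: linear_simps)
  define u where "u = (1 / norm v) *\<^sub>R v"
  have nu: "norm u = 1" using \<open>v \<noteq> 0\<close> by (simp add: u_def)
  have iuu: "inner u u = 1" using nu by (simp add: power2_norm_eq_inner[symmetric])
  have Du: "norm (D u) > \<nu> - \<delta>"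
  proof -
    have "D u = (1 / norm v) *\<^sub>R D v" using blD by (simp add: u_def linear_simps)
    then have "norm (D u) = norm (D v) / norm v" by simp
    moreover have "\<nu> - \<delta> < norm (D v) / norm v" using v \<open>v \<noteq> 0\<close> by (simp add: pos_less_divide_eq)
    ultimately show ?thesis by simp
  qed
  define y where "y = (norm (D u))\<^sup>2"
  have yle: "y \<le> \<mu>" using Dle[of u] nu by (simp add: y_def \<mu>_def power_mono)
  have \<delta>le: "\<delta> \<le> \<nu>/2" by (simp add: \<delta>_def)
  have ylow: "y \<ge> \<mu>/4"
  proof -
    have "\<nu>/2 \<le> norm (D u)" using Du \<delta>le by simp
    then have "(\<nu>/2)\<^sup>2 \<le> y" unfolding y_def using \<nu>pos by (intro power_mono) auto
    then show ?thesis by (simp add: \<mu>_def power2_eq_square)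
  qed
  have ydiff: "\<mu> - y \<le> 2 * \<nu> * \<delta>"
  proof -
    have "0 \<le> \<nu> - \<delta>" using \<delta>le \<nu>pos by simp
    then have "(\<nu> - \<delta>)\<^sup>2 \<le> y" unfolding y_def using Du by (intro power_mono) auto
    moreover have e: "(\<nu> - \<delta>)\<^sup>2 = \<nu>\<^sup>2 - 2*\<nu>*\<delta> + \<delta>*\<delta>" by (simp add: power2_eq_square algebra_simps)
    moreover have "0 \<le> \<delta>*\<delta>" by simp
    ultimately show ?thesis unfolding \<mu>_def by linarith
  qed
  define w where "w = D (D u) - \<mu> *\<^sub>R u"
  have innDDu: "inner (D (D u)) u = y" using sD by (simp add: sa_def y_def power2_norm_eq_inner)
  have DDu: "(norm (D (D u)))\<^sup>2 \<le> \<mu> * y"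
  proof -
    have "norm (D (D u)) \<le> \<nu> * norm (D u)" by (rule Dle)
    then have "(norm (D (D u)))\<^sup>2 \<le> (\<nu> * norm (D u))\<^sup>2" by (intro power_mono) auto
    then show ?thesis by (simp add: \<mu>_def y_def power_mult_distrib)
  qed
  have w2: "(norm w)\<^sup>2 \<le> \<mu> * (\<mu> - y)"
  proof -
    have "(norm w)\<^sup>2 = inner w w" by (simp add: power2_norm_eq_inner)
    also have "\<dots> = inner (D (D u)) (D (D u)) - 2 * \<mu> * inner (D (D u)) u + \<mu>\<^sup>2 * inner u u"
      unfolding w_def inner_diff_left inner_diff_right inner_scaleR_left inner_scaleR_right inner_commute[of u "D (D u)"]
      by (simp add: power2_eq_square algebra_simps)
    also have "\<dots> = (norm (D (D u)))\<^sup>2 - 2 * \<mu> * y + \<mu>\<^sup>2" by (simp add: innDDu iuu power2_norm_eq_inner)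
    also have "\<dots> \<le> \<mu> * y - 2 * \<mu> * y + \<mu>\<^sup>2" using DDu by simp
    finally show ?thesis by (simp add: power2_eq_square algebra_simps)
  qed
  have neg: "inner (K u) (D (D u)) \<le> 0"
  proof -
    have "0 \<le> inner (D u) (K (D u))" by (rule nK)
    also have "\<dots> = inner u (D (K (D u)))" using sD by (simp add: sa_def)
    also have "\<dots> = - inner u (K (D (D u)))" by (simp add: anti)
    also have "\<dots> = - inner (K u) (D (D u))" using sK by (simp add: sa_def)
    finally show ?thesis by simp
  qed
  define X where "X = inner u (K u)"
  have X0: "X \<ge> 0" by (simp add: X_def nK)
  have muX: "\<mu> * X \<le> LK * norm w"
  proof -
    have "\<mu> * X = inner (K u) (D (D u)) - inner (K u) w"
      by (simp add: X_def w_def inner_diff_right inner_commute)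
    also have "\<dots> \<le> - inner (K u) w" using neg by simp
    also have "\<dots> \<le> norm (K u) * norm w"
      using norm_cauchy_schwarz[of "K u" "- w"] by simp
    also have "\<dots> \<le> LK * norm w" using LK(2)[rule_format, of u] nu by (simp add: mult_right_mono)
    finally show ?thesis .
  qed
  have yX: "y \<le> 2 * L * X"
  proof -
    have "D u = S u - T u" by (simp add: D_def)
    then have "norm (D u) \<le> norm (S u) + norm (T u)" by (simp add: norm_triangle_ineq4)
    then have "y \<le> (norm (S u) + norm (T u))\<^sup>2" unfolding y_def by (intro power_mono) auto
    also have "\<dots> \<le> 2 * (norm (S u))\<^sup>2 + 2 * (norm (T u))\<^sup>2"
    proof -
      have "2 * (norm (S u))\<^sup>2 + 2 * (norm (T u))\<^sup>2 - (norm (S u) + norm (T u))\<^sup>2 = (norm (S u) - norm (T u))\<^sup>2"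
        by (simp add: power2_eq_square algebra_simps)
      moreover have "0 \<le> (norm (S u) - norm (T u))\<^sup>2" by simp
      ultimately show ?thesis by linarith
    qed
    also have "\<dots> \<le> 2 * (L * inner u (S u)) + 2 * (L * inner u (T u))"
    proof -
      have "(norm (S u))\<^sup>2 \<le> L * inner u (S u)"
        using LS(2)[rule_format, of u] nS by (smt (verit) L_def max.cobounded1 mult_right_mono)
      moreover have "(norm (T u))\<^sup>2 \<le> L * inner u (T u)"
        using LT(2)[rule_format, of u] nT by (smt (verit) L_def max.cobounded2 mult_right_mono)
      ultimately show ?thesis by simp
    qed
    also have "\<dots> = 2 * L * X" by (simp add: X_def K_def inner_add_right algebra_simps)
    finally show ?thesis .
  qed
  have y0: "y \<ge> 0" by (simp add: y_def)
  have "(\<mu> * y)\<^sup>2 \<le> (2 * L * (\<mu> * X))\<^sup>2"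
    using yX \<mu>pos y0 L by (intro power_mono) (auto simp: mult_left_mono algebra_simps)
  also have "\<dots> \<le> (2 * L * (LK * norm w))\<^sup>2"
    using muX L \<mu>pos X0 by (intro power_mono) auto
  also have "\<dots> = 4 * L\<^sup>2 * LK\<^sup>2 * (norm w)\<^sup>2" by (simp add: power_mult_distrib)
  also have "\<dots> \<le> C * (\<mu> * (\<mu> - y))" unfolding C_def using w2 L LK by (intro mult_left_mono) auto
  finally have key: "(\<mu> * y)\<^sup>2 \<le> C * (\<mu> * (\<mu> - y))" .
  have "(\<mu> * (\<mu>/4))\<^sup>2 \<le> (\<mu> * y)\<^sup>2" using ylow \<mu>pos by (intro power_mono) auto
  also note key
  also have "C * (\<mu> * (\<mu> - y)) \<le> C * (\<mu> * (2 * \<nu> * \<delta>))"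
    using ydiff Cpos \<mu>pos by (intro mult_left_mono) auto
  also have "\<dots> \<le> C * (\<mu> * (2 * \<nu> * (\<mu>^3 / (64 * C * \<nu>))))"
    using Cpos \<mu>pos \<nu>pos by (intro mult_left_mono) (auto simp: \<delta>_def)
  also have "\<dots> = \<mu>^4 / 32" using Cpos \<nu>pos by (simp add: field_simps power_def)
  finally have "(\<mu> * (\<mu>/4))\<^sup>2 \<le> \<mu>^4 / 32" .
  then have "\<mu>^4 / 16 \<le> \<mu>^4 / 32" by (simp add: power2_eq_square power_def field_simps)
  then show False using \<mu>pos by simp
qed



subclass (in complex_hilbert) banach ..

definition ser :: "('a::real_normed_vector \<Rightarrow> 'a) \<Rightarrow> (nat \<Rightarrow> real) \<Rightarrow> 'a \<Rightarrow> 'a" where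
  "ser E a x = (\<Sum>n. a n *\<^sub>R (E ^^ n) x)"

definition conv :: "(nat \<Rightarrow> real) \<Rightarrow> (nat \<Rightarrow> real) \<Rightarrow> nat \<Rightarrow> real" where
  "conv a b k = (\<Sum>i\<le>k. a i * b (k - i))"

locale opser =
  fixes E :: "'a::complex_hilbert \<Rightarrow> 'a" and r :: real
  assumes blE: "bounded_linear E" and r0: "0 \<le> r" and Eb: "\<And>x. norm (E x) \<le> r * norm x"
begin

lemma bl_pow: "bounded_linear (E ^^ n)"
  by (induction n) (auto simp: blE bounded_linear_ident[unfolded id_def] intro: bounded_linear_compose)

lemma pow_bound: "norm ((E ^^ n) x) \<le> r ^ n * norm x"
proof (induction n)
  case 0 then show ?case by simp
next
  case (Suc n)
  have "norm ((E ^^ Suc n) x) = norm (E ((E ^^ n) x))" by simp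
  also have "\<dots> \<le> r * norm ((E ^^ n) x)" by (rule Eb)
  also have "\<dots> \<le> r * (r ^ n * norm x)" using Suc r0 by (simp add: mult_left_mono)
  finally show ?case by simp
qed

lemma term_bound: "norm (a n *\<^sub>R (E ^^ n) x) \<le> (\<bar>a n\<bar> * r ^ n) * norm x"
  using pow_bound[of n x] by (simp add: mult_left_mono mult.assoc)

lemma ser_norm_summable:
  assumes "summable (\<lambda>n. \<bar>a n\<bar> * r ^ n)"
  shows "summable (\<lambda>n. norm (a n *\<^sub>R (E ^^ n) x))"
  by (rule summable_comparison_test[OF _ summable_mult2[OF assms, of "norm x"]])
    (use term_bound in \<open>auto simp del: norm_scaleR\<close>)

lemma ser_summable:
  assumes "summable (\<lambda>n. \<bar>a n\<bar> * r ^ n)"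
  shows "summable (\<lambda>n. a n *\<^sub>R (E ^^ n) x)"
  using ser_norm_summable[OF assms] by (rule summable_norm_cancel)

lemma ser_sums:
  assumes "summable (\<lambda>n. \<bar>a n\<bar> * r ^ n)"
  shows "(\<lambda>n. a n *\<^sub>R (E ^^ n) x) sums ser E a x"
  unfolding ser_def using ser_summable[OF assms] by (rule summable_sums)

lemma ser_has_sum:
  assumes "summable (\<lambda>n. \<bar>a n\<bar> * r ^ n)"
  shows "((\<lambda>n. a n *\<^sub>R (E ^^ n) x) has_sum ser E a x) UNIV"
  by (rule norm_summable_imp_has_sum[OF ser_norm_summable[OF assms] ser_sums[OF assms]])

lemma ser_bl:
  assumes g: "summable (\<lambda>n. \<bar>a n\<bar> * r ^ n)"
  shows "bounded_linear (ser E a)"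
proof (rule bounded_linear_intro)
  fix x y
  have "(\<lambda>n. a n *\<^sub>R (E ^^ n) x + a n *\<^sub>R (E ^^ n) y) sums (ser E a x + ser E a y)"
    by (intro sums_add ser_sums g)
  moreover have "(\<lambda>n. a n *\<^sub>R (E ^^ n) x + a n *\<^sub>R (E ^^ n) y) = (\<lambda>n. a n *\<^sub>R (E ^^ n) (x + y))"
    using bl_pow by (simp add: linear_simps scaleR_add_right)
  ultimately show "ser E a (x + y) = ser E a x + ser E a y"
    using ser_sums[OF g, of "x + y"] sums_unique2 by metis
next
  fix c x
  have "(\<lambda>n. c *\<^sub>R (a n *\<^sub>R (E ^^ n) x)) sums (c *\<^sub>R ser E a x)"
    by (intro sums_scaleR_right ser_sums g)
  moreover have "(\<lambda>n. c *\<^sub>R (a n *\<^sub>R (E ^^ n) x)) = (\<lambda>n. a n *\<^sub>R (E ^^ n) (c *\<^sub>R x))"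
    using bl_pow by (simp add: linear_simps mult.commute)
  ultimately show "ser E a (c *\<^sub>R x) = c *\<^sub>R ser E a x"
    using ser_sums[OF g, of "c *\<^sub>R x"] sums_unique2 by metis
next
  fix x
  have "norm (ser E a x) \<le> (\<Sum>n. norm (a n *\<^sub>R (E ^^ n) x))"
    unfolding ser_def by (rule summable_norm[OF ser_norm_summable[OF g]])
  also have "\<dots> \<le> (\<Sum>n. (\<bar>a n\<bar> * r ^ n) * norm x)"
    by (intro suminf_le ser_norm_summable g summable_mult2 term_bound)
  also have "\<dots> = norm x * (\<Sum>n. \<bar>a n\<bar> * r ^ n)"
    using suminf_mult2[OF g, of "norm x"] by (simp add: mult.commute)
  finally show "norm (ser E a x) \<le> norm x * (\<Sum>n. \<bar>a n\<bar> * r ^ n)" .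
qed

lemma pow_comm:
  assumes "\<And>x. C (E x) = E (C x)"
  shows "C ((E ^^ n) x) = (E ^^ n) (C x)"
  by (induction n) (auto simp: assms)

lemma ser_comm:
  assumes g: "summable (\<lambda>n. \<bar>a n\<bar> * r ^ n)"
    and blC: "bounded_linear C" and c: "\<And>x. C (E x) = E (C x)"
  shows "C (ser E a x) = ser E a (C x)"
proof -
  have "C (ser E a x) = (\<Sum>n. C (a n *\<^sub>R (E ^^ n) x))"
    unfolding ser_def by (rule bounded_linear.suminf[OF blC ser_summable[OF g]])
  also have "\<dots> = ser E a (C x)"
    unfolding ser_def using blC by (simp add: linear_simps pow_comm[of C, OF c])
  finally show ?thesis .
qed

lemma pow_sa:
  assumes "sa E"
  shows "inner ((E ^^ n) x) y = inner x ((E ^^ n) y)"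
proof (induction n arbitrary: x y)
  case (Suc n)
  have "inner ((E ^^ Suc n) x) y = inner ((E ^^ n) x) (E y)" using assms by (simp add: sa_def)
  also have "\<dots> = inner x ((E ^^ n) (E y))" by (rule Suc)
  also have "(E ^^ n) (E y) = (E ^^ Suc n) y" by (simp add: funpow_swap1)
  finally show ?case .
qed simp

lemma ser_sa:
  assumes g: "summable (\<lambda>n. \<bar>a n\<bar> * r ^ n)" and s: "sa E"
  shows "sa (ser E a)"
  unfolding sa_def
proof (intro allI)
  fix x y
  have "inner (ser E a x) y = (\<Sum>n. inner (a n *\<^sub>R (E ^^ n) x) y)"
    unfolding ser_def by (rule bounded_linear.suminf[OF bounded_linear_inner_left ser_summable[OF g]])
  also have "\<dots> = (\<Sum>n. inner x (a n *\<^sub>R (E ^^ n) y))"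
    by (simp add: pow_sa[OF s])
  also have "\<dots> = inner x (ser E a y)"
    unfolding ser_def by (rule bounded_linear.suminf[OF bounded_linear_inner_right ser_summable[OF g], symmetric])
  finally show "inner (ser E a x) y = inner x (ser E a y)" .
qed

lemma conv_good:
  assumes ga: "summable (\<lambda>n. \<bar>a n\<bar> * r ^ n)" and gb: "summable (\<lambda>n. \<bar>b n\<bar> * r ^ n)"
  shows "summable (\<lambda>n. \<bar>conv a b n\<bar> * r ^ n)"
proof -
  have na: "summable (\<lambda>n. norm (\<bar>a n\<bar> * r ^ n))" using ga r0 by simp
  have nb: "summable (\<lambda>n. norm (\<bar>b n\<bar> * r ^ n))" using gb r0 by simp
  have s: "summable (\<lambda>k. \<Sum>i\<le>k. (\<bar>a i\<bar> * r ^ i) * (\<bar>b (k - i)\<bar> * r ^ (k - i)))"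
    by (rule summable_Cauchy_product[OF na nb])
  show ?thesis
  proof (rule summable_comparison_test[OF _ s], intro exI allI impI)
    fix k :: nat
    have "norm (\<bar>conv a b k\<bar> * r ^ k) = \<bar>conv a b k\<bar> * r ^ k" using r0 by simp
    also have "\<dots> \<le> (\<Sum>i\<le>k. \<bar>a i * b (k - i)\<bar>) * r ^ k"
      unfolding conv_def using r0 by (intro mult_right_mono sum_abs) auto
    also have "\<dots> = (\<Sum>i\<le>k. (\<bar>a i\<bar> * r ^ i) * (\<bar>b (k - i)\<bar> * r ^ (k - i)))"
      unfolding sum_distrib_right
    proof (rule sum.cong)
      fix i assume "i \<in> {..k}"
      then have "r ^ k = r ^ i * r ^ (k - i)" by (simp add: power_add[symmetric])
      then show "\<bar>a i * b (k - i)\<bar> * r ^ k = \<bar>a i\<bar> * r ^ i * (\<bar>b (k - i)\<bar> * r ^ (k - i))"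
        by (simp add: abs_mult algebra_simps)
    qed simp
    finally show "norm (\<bar>conv a b k\<bar> * r ^ k) \<le> (\<Sum>i\<le>k. (\<bar>a i\<bar> * r ^ i) * (\<bar>b (k - i)\<bar> * r ^ (k - i)))" .
  qed
qed

lemma ser_comp:
  assumes ga: "summable (\<lambda>n. \<bar>a n\<bar> * r ^ n)" and gb: "summable (\<lambda>n. \<bar>b n\<bar> * r ^ n)"
  shows "ser E a (ser E b x) = ser E (conv a b) x"
proof -
  define f where "f p = (a (fst p) * b (snd p)) *\<^sub>R (E ^^ (fst p + snd p)) x" for p
  define g where "g p = ((\<bar>a (fst p)\<bar> * r ^ fst p) * (\<bar>b (snd p)\<bar> * r ^ snd p)) * norm x" for p
  define Sa where "Sa = (\<Sum>n. \<bar>a n\<bar> * r ^ n)"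
  define Sb where "Sb = (\<Sum>n. \<bar>b n\<bar> * r ^ n)"
  have hb: "((\<lambda>n. \<bar>b n\<bar> * r ^ n) has_sum Sb) UNIV"
    unfolding Sb_def using r0 by (intro sums_nonneg_imp_has_sum summable_sums gb) auto
  have ha: "((\<lambda>n. \<bar>a n\<bar> * r ^ n) has_sum Sa) UNIV"
    unfolding Sa_def using r0 by (intro sums_nonneg_imp_has_sum summable_sums ga) auto
  have gsum: "g summable_on (Sigma UNIV (\<lambda>_. UNIV))"
  proof (rule summable_on_SigmaI)
    fix i :: nat assume "i \<in> UNIV"
    show "((\<lambda>j. g (i, j)) has_sum ((\<bar>a i\<bar> * r ^ i) * Sb * norm x)) UNIV"
      unfolding g_def fst_conv snd_conv
      by (intro has_sum_cmult_left has_sum_cmult_right hb)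
  next
    show "(\<lambda>i. (\<bar>a i\<bar> * r ^ i) * Sb * norm x) summable_on UNIV"
      using has_sum_cmult_left[OF has_sum_cmult_left[OF ha, of Sb], of "norm x"]
      by (auto simp: summable_on_def)
  next
    fix i j :: nat
    show "0 \<le> g (i, j)" unfolding g_def using r0 by simp
  qed
  have "(\<lambda>p. norm (f p)) summable_on (Sigma UNIV (\<lambda>_. UNIV))"
  proof (rule Infinite_Sum.abs_summable_on_comparison_test'[OF gsum])
    fix p :: "nat \<times> nat"
    have "norm (f p) = \<bar>a (fst p) * b (snd p)\<bar> * norm ((E ^^ (fst p + snd p)) x)"
      by (simp add: f_def)
    also have "\<dots> \<le> \<bar>a (fst p) * b (snd p)\<bar> * (r ^ (fst p + snd p) * norm x)"
      by (intro mult_left_mono pow_bound) auto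
    also have "\<dots> = g p" by (simp add: g_def abs_mult power_add algebra_simps)
    finally show "norm (f p) \<le> g p" .
  qed
  then have fsum: "f summable_on (Sigma UNIV (\<lambda>_. UNIV))"
    by (rule abs_summable_summable)
  define S where "S = infsum f (Sigma UNIV (\<lambda>_. UNIV))"
  have hf: "(f has_sum S) (Sigma UNIV (\<lambda>_. UNIV))"
    unfolding S_def using fsum by (rule has_sum_infsum)
  have "((\<lambda>i. a i *\<^sub>R (E ^^ i) (ser E b x)) has_sum S) UNIV"
  proof (rule has_sum_Sigma[OF isUCont_plus hf])
    fix i :: nat assume "i \<in> UNIV"
    have bl: "bounded_linear (\<lambda>v. a i *\<^sub>R (E ^^ i) v)"
      by (intro bounded_linear_scaleR_right[THEN bounded_linear_compose] bl_pow)
    have "((\<lambda>j. a i *\<^sub>R (E ^^ i) (b j *\<^sub>R (E ^^ j) x)) has_sum a i *\<^sub>R (E ^^ i) (ser E b x)) UNIV"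
      by (rule has_sum_bounded_linear[OF bl ser_has_sum[OF gb]])
    moreover have "\<And>j. a i *\<^sub>R (E ^^ i) (b j *\<^sub>R (E ^^ j) x) = f (i, j)"
      using bl_pow[of i] by (simp add: f_def linear_simps funpow_add)
    ultimately show "((\<lambda>j. f (i, j)) has_sum a i *\<^sub>R (E ^^ i) (ser E b x)) UNIV" by simp
  qed
  then have S1: "S = ser E a (ser E b x)"
    using ser_sums[OF ga, of "ser E b x"] has_sum_imp_sums sums_unique2 by blast
  have hf2: "((\<lambda>q. f (snd q, fst q - snd q)) has_sum S) (Sigma UNIV (\<lambda>k. {..k}))"
  proof -
    have "((\<lambda>q. f (snd q, fst q - snd q)) has_sum S) (Sigma UNIV (\<lambda>k. {..k})) = (f has_sum S) (Sigma UNIV (\<lambda>_. UNIV))"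
    proof (rule has_sum_reindex_bij_witness[where i = "\<lambda>p. (fst p + snd p, fst p)" and j = "\<lambda>q. (snd q, fst q - snd q)"])
      fix q :: "nat \<times> nat" assume "q \<in> Sigma UNIV (\<lambda>k. {..k})"
      then have "snd q \<le> fst q" by (cases q) simp
      then show "(fst (snd q, fst q - snd q) + snd (snd q, fst q - snd q), fst (snd q, fst q - snd q)) = q"
        by (cases q) simp
    next
      fix p :: "nat \<times> nat"
      show "(fst p + snd p, fst p) \<in> Sigma UNIV (\<lambda>k. {..k})" by (cases p) simp
      show "(snd (fst p + snd p, fst p), fst (fst p + snd p, fst p) - snd (fst p + snd p, fst p)) = p"
        by (cases p) simp
    qed auto
    then show ?thesis using hf by simp
  qed
  have "((\<lambda>k. conv a b k *\<^sub>R (E ^^ k) x) has_sum S) UNIV"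
  proof (rule has_sum_Sigma[OF isUCont_plus hf2])
    fix k :: nat assume "k \<in> UNIV"
    have "((\<lambda>i. f (i, k - i)) has_sum (\<Sum>i\<le>k. f (i, k - i))) {..k}"
      by (rule has_sum_finiteI) auto
    moreover have "(\<Sum>i\<le>k. f (i, k - i)) = conv a b k *\<^sub>R (E ^^ k) x"
      unfolding conv_def scaleR_sum_left f_def by (intro sum.cong refl) simp
    ultimately show "((\<lambda>i. f (snd (k, i), fst (k, i) - snd (k, i))) has_sum conv a b k *\<^sub>R (E ^^ k) x) {..k}"
      by simp
  qed
  then have S2: "S = ser E (conv a b) x"
    using ser_sums[OF conv_good[OF ga gb], of x] has_sum_imp_sums sums_unique2 by blast
  show ?thesis using S1 S2 by simp
qed

end



lemma cs_bound2:
  fixes S :: "'a::real_inner \<Rightarrow> 'a"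
  assumes bl: "bounded_linear S" and s: "sa S" and nn: "\<forall>w. 0 \<le> inner w (S w)"
    and K: "K > 0" and up: "\<And>w. inner w (S w) \<le> K * (norm w)\<^sup>2"
  shows "(norm (S v))\<^sup>2 \<le> K * inner v (S v)"
proof -
  define u where "u = S v"
  define t where "t = 1/K"
  have lin: "S (v - t *\<^sub>R u) = S v - t *\<^sub>R S u"
    using bl by (simp add: linear_simps)
  have uS: "S v = u" by (simp add: u_def)
  have e1: "inner v (S u) = inner u u" using s unfolding sa_def uS[symmetric] by metis
  have "0 \<le> inner (v - t *\<^sub>R u) (S (v - t *\<^sub>R u))" using nn by blast
  also have "\<dots> = inner v (S v) - 2 * t * inner u u + t\<^sup>2 * inner u (S u)"
    unfolding lin uS by (simp add: inner_diff_left inner_diff_right e1 inner_commute[of u v] power2_eq_square algebra_simps)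
  also have "\<dots> \<le> inner v (S v) - 2 * t * inner u u + t\<^sup>2 * (K * (norm u)\<^sup>2)"
    using up[of u] by (simp add: mult_left_mono)
  also have "\<dots> = inner v (S v) - (norm u)\<^sup>2 / K"
    using K by (simp add: t_def power2_norm_eq_inner[symmetric]) (simp add: power2_eq_square field_simps)
  finally show "(norm (S v))\<^sup>2 \<le> K * inner v (S v)"
    using K by (simp add: u_def field_simps)
qed

lemma norm_cscale_ii: "norm (cscale \<i> x) = norm (x::'a::complex_hilbert)"
proof -
  have "(norm (cscale \<i> x))\<^sup>2 = (norm x)\<^sup>2"
    by (simp add: power2_norm_eq_inner inner_cscale_ii)
  then show ?thesis by (simp add: power2_eq_iff_nonneg)
qed

lemma cscale_decomp: "cscale c x = Re c *\<^sub>R x + Im c *\<^sub>R cscale \<i> (x::'a::complex_hilbert)"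
proof -
  have "c = complex_of_real (Re c) + complex_of_real (Im c) * \<i>" by (simp add: complex_eq_iff)
  then have "cscale c x = cscale (complex_of_real (Re c)) x + cscale (complex_of_real (Im c) * \<i>) x"
    by (metis cscale_add_left)
  also have "\<dots> = Re c *\<^sub>R x + Im c *\<^sub>R cscale \<i> x"
    by (simp add: cscale_of_real cscale_cscale[symmetric])
  finally show ?thesis .
qed

lemma bl_cscale: "bounded_linear (cscale c :: 'a::complex_hilbert \<Rightarrow> 'a)"
proof (rule bounded_linear_intro)
  fix x y :: 'a show "cscale c (x + y) = cscale c x + cscale c y" by (rule cscale_add_right)
next
  fix r and x :: 'a show "cscale c (r *\<^sub>R x) = r *\<^sub>R cscale c x" by (rule cscale_scaleR)
next
  fix x :: 'a
  have "norm (cscale c x) \<le> norm (Re c *\<^sub>R x) + norm (Im c *\<^sub>R cscale \<i> x)"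
    unfolding cscale_decomp[of c x] by (rule norm_triangle_ineq)
  also have "\<dots> = norm x * (\<bar>Re c\<bar> + \<bar>Im c\<bar>)" by (simp add: norm_cscale_ii algebra_simps)
  finally show "norm (cscale c x) \<le> norm x * (\<bar>Re c\<bar> + \<bar>Im c\<bar>)" .
qed

lemma gchoose_summable:
  fixes r :: real
  assumes "0 \<le> r" "r < 1"
  shows "summable (\<lambda>n. \<bar>\<alpha> gchoose n\<bar> * r ^ n)"
proof -
  have "ereal (norm r) < conv_radius (\<lambda>n. \<alpha> gchoose n)"
    using assms by (simp add: conv_radius_gchoose)
  from abs_summable_in_conv_radius[OF this] show ?thesis
    using assms by (simp add: abs_mult)
qed

lemma conv_gchoose: "conv (\<lambda>n. \<alpha> gchoose n) (\<lambda>n. \<beta> gchoose n) = (\<lambda>n. (\<alpha> + \<beta>) gchoose n :: real)"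
  by (rule ext) (simp add: conv_def gbinomial_Vandermonde[symmetric] atLeast0AtMost)

locale posinv =
  fixes P :: "'a::complex_hilbert \<Rightarrow> 'a" and c :: real
  assumes bP: "bounded_op P" and sP: "sa P" and cpos: "c > 0"
    and lowP: "\<And>x. c * (norm x)\<^sup>2 \<le> inner x (P x)"
begin

definition "k = onorm P + 2 * c"
definition "E x = (1 / k) *\<^sub>R P x - x"
definition "r = 1 - c / k"

lemma blP: "bounded_linear P" using bP by (simp add: bounded_op_def)
lemma kpos: "k > 0" using onorm_pos_le[OF blP] cpos by (simp add: k_def)
lemma Pk: "norm (P x) \<le> k * norm x"
proof -
  have "norm (P x) \<le> onorm P * norm x" by (rule onorm[OF blP])
  also have "\<dots> \<le> k * norm x" using cpos by (simp add: k_def mult_right_mono)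
  finally show ?thesis .
qed
lemma r_bounds: "1/2 \<le> r" "r < 1"
  using onorm_pos_le[OF blP] cpos kpos by (auto simp: r_def k_def field_simps)

lemma blE: "bounded_linear E"
  unfolding E_def[abs_def]
  by (intro bounded_linear_sub bounded_linear_scaleR_right[THEN bounded_linear_compose] blP bounded_linear_ident)

lemma sE: "sa E"
  using sP by (simp add: sa_def E_def inner_diff_left inner_diff_right)

lemma Eb: "norm (E x) \<le> r * norm x"
proof -
  define S where "S x = - E x" for x
  have blS: "bounded_linear S" unfolding S_def[abs_def] using blE by (rule bounded_linear_minus)
  have sS: "sa S" using sE by (simp add: sa_def S_def)
  have iS: "inner w (S w) = (norm w)\<^sup>2 - inner w (P w) / k" for w
    by (simp add: S_def E_def inner_diff_right power2_norm_eq_inner)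
  have nS: "\<forall>w. 0 \<le> inner w (S w)"
  proof
    fix w
    have "inner w (P w) \<le> norm w * norm (P w)" by (rule norm_cauchy_schwarz)
    also have "\<dots> \<le> norm w * (k * norm w)" by (intro mult_left_mono Pk) auto
    finally have "inner w (P w) / k \<le> (norm w)\<^sup>2" using kpos by (simp add: field_simps power2_eq_square)
    then show "0 \<le> inner w (S w)" by (simp add: iS)
  qed
  have upS: "inner w (S w) \<le> r * (norm w)\<^sup>2" for w
  proof -
    have "c * (norm w)\<^sup>2 / k \<le> inner w (P w) / k" using lowP[of w] kpos by (simp add: divide_right_mono)
    then show ?thesis by (simp add: iS r_def algebra_simps)
  qed
  have r0: "r > 0" using r_bounds by simp
  have "(norm (S x))\<^sup>2 \<le> r * inner x (S x)" by (rule cs_bound2[OF blS sS nS r0 upS])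
  also have "\<dots> \<le> r * (r * (norm x)\<^sup>2)" using upS[of x] r0 by (simp add: mult_left_mono)
  also have "r * (r * (norm x)\<^sup>2) = (r * norm x)\<^sup>2" by (simp add: power2_eq_square)
  finally have "(norm (E x))\<^sup>2 \<le> (r * norm x)\<^sup>2" by (simp add: S_def)
  then show ?thesis using r0 by (simp add: power2_le_iff_abs_le)
qed

sublocale opser E r
  by (rule opser.intro[OF blE _ Eb]) (use r_bounds in auto)

definition pw :: "real \<Rightarrow> 'a \<Rightarrow> 'a" where
  "pw \<alpha> x = (k powr \<alpha>) *\<^sub>R ser E (\<lambda>n. \<alpha> gchoose n) x"

lemma gs: "summable (\<lambda>n. \<bar>\<alpha> gchoose n\<bar> * r ^ n)"
  using r_bounds by (intro gchoose_summable) auto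

lemma pw_bl: "bounded_linear (pw \<alpha>)"
  unfolding pw_def[abs_def]
  by (intro bounded_linear_scaleR_right[THEN bounded_linear_compose] ser_bl gs)

lemma pw_comp: "pw \<alpha> (pw \<beta> x) = pw (\<alpha> + \<beta>) x"
proof -
  have "pw \<alpha> (pw \<beta> x) = (k powr \<alpha> * k powr \<beta>) *\<^sub>R ser E (\<lambda>n. \<alpha> gchoose n) (ser E (\<lambda>n. \<beta> gchoose n) x)"
    unfolding pw_def using ser_bl[OF gs, of \<alpha>] by (simp add: linear_simps)
  also have "\<dots> = pw (\<alpha> + \<beta>) x"
    unfolding pw_def ser_comp[OF gs gs] conv_gchoose powr_add by simp
  finally show ?thesis .
qed

lemma pw0: "pw 0 x = x"
proof -
  have "ser E (\<lambda>n. 0 gchoose n) x = (\<Sum>n\<in>{0}. (0 gchoose n) *\<^sub>R (E ^^ n) x)"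
    unfolding ser_def by (rule suminf_finite) (auto simp: gbinomial_0_left)
  then show ?thesis using kpos by (simp add: pw_def)
qed

lemma gchoose1: "(1::real) gchoose n = (if n = 0 \<or> n = 1 then 1 else 0)"
proof -
  have "(1::real) gchoose n = of_nat (1 choose n)" by (metis binomial_gbinomial of_nat_1)
  then show ?thesis by (cases n) (auto simp: binomial_eq_0)
qed

lemma pw1: "pw 1 x = P x"
proof -
  have "ser E (\<lambda>n. 1 gchoose n) x = (\<Sum>n\<in>{0,1}. (1 gchoose n) *\<^sub>R (E ^^ n) x)"
    unfolding ser_def by (rule suminf_finite) (auto simp: gchoose1)
  also have "\<dots> = x + E x" by simp
  also have "\<dots> = (1 / k) *\<^sub>R P x" by (simp add: E_def)
  finally show ?thesis using kpos by (simp add: pw_def)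
qed

lemma pw_sa: "sa (pw \<alpha>)"
  using ser_sa[OF gs sE, of \<alpha>] by (simp add: sa_def pw_def)

lemma E_comm:
  assumes "bounded_linear C" "\<And>x. C (P x) = P (C x)"
  shows "C (E x) = E (C x)"
  using assms by (simp add: E_def linear_simps)

lemma pw_comm:
  assumes "bounded_linear C" "\<And>x. C (P x) = P (C x)"
  shows "C (pw \<alpha> x) = pw \<alpha> (C x)"
  unfolding pw_def using assms(1) ser_comm[OF gs assms(1) E_comm[OF assms]] by (simp add: linear_simps)

lemma pw_nonneg: "0 \<le> inner x (pw \<alpha> x)"
proof -
  have "inner x (pw \<alpha> x) = inner x (pw (\<alpha>/2) (pw (\<alpha>/2) x))" by (simp add: pw_comp)
  also have "\<dots> = inner (pw (\<alpha>/2) x) (pw (\<alpha>/2) x)" using pw_sa by (simp add: sa_def)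
  finally show ?thesis by simp
qed

lemma pw_bop: "bounded_op (pw \<alpha>)"
  unfolding bounded_op_def
proof (intro conjI allI)
  show "bounded_linear (pw \<alpha>)" by (rule pw_bl)
  fix c' x
  show "pw \<alpha> (cscale c' x) = cscale c' (pw \<alpha> x)"
    using pw_comm[OF bl_cscale, of c' \<alpha> x] bP by (simp add: bounded_op_def)
qed

lemma pw_pos: "positive_op (pw \<alpha>)"
  using pw_bop pw_sa pw_nonneg by (simp add: positive_op_iff)

end



lemma op_sqrt_eq:
  assumes R: "positive_op R" and RT: "R \<circ> R = T"
  shows "op_sqrt T = R"
  unfolding op_sqrt_def
proof (rule the_equality)
  show "positive_op R \<and> R \<circ> R = T" using assms by simp
  fix S assume S: "positive_op S \<and> S \<circ> S = T"
  have "\<And>x. S (S x) = R (R x)" using S RT by (metis comp_apply)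
  then show "S = R"
    using S R by (intro sqrt_unique) (auto simp: positive_op_iff bounded_op_def)
qed

lemma bop_comp: "bounded_op F \<Longrightarrow> bounded_op G \<Longrightarrow> bounded_op (\<lambda>z. F (G z))"
  unfolding bounded_op_def by (auto intro: bounded_linear_compose[of F G, unfolded o_def])

lemma bop_zero: "bounded_op (\<lambda>_. 0 :: 'a::complex_hilbert)"
  by (simp add: bounded_op_def bounded_linear_zero)

lemma block_apply: "block P Q R S (x, y) = (P x + Q y, R x + S y)"
  by (simp add: block_def)

lemma bop_block:
  assumes "bounded_op P" "bounded_op Q" "bounded_op R" "bounded_op S"
  shows "bounded_op (block P Q R S)"
proof -
  have bl: "bounded_linear P" "bounded_linear Q" "bounded_linear R" "bounded_linear S"
    using assms by (auto simp: bounded_op_def)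
  have eq: "block P Q R S = (\<lambda>z. (P (fst z) + Q (snd z), R (fst z) + S (snd z)))"
    by (auto simp: block_def fun_eq_iff)
  have "bounded_linear (\<lambda>z. (P (fst z) + Q (snd z), R (fst z) + S (snd z)))"
    by (intro bounded_linear_Pair bounded_linear_add
        bounded_linear_compose[OF bl(1) bounded_linear_fst] bounded_linear_compose[OF bl(2) bounded_linear_snd]
        bounded_linear_compose[OF bl(3) bounded_linear_fst] bounded_linear_compose[OF bl(4) bounded_linear_snd])
  moreover have "\<forall>c z. block P Q R S (cscale c z) = cscale c (block P Q R S z)"
    using assms by (auto simp: block_def cscale_prod_def bounded_op_def cscale_add_right split: prod.splits)
  ultimately show ?thesis unfolding bounded_op_def eq by simp
qed

lemma sa_diag:
  assumes "sa W"
  shows "sa (block W (\<lambda>_. 0) (\<lambda>_. 0) W)"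
  using assms by (auto simp: sa_def block_def inner_prod_def split: prod.splits)

theorem corollary2p11:
  fixes A B X Xs :: "'a::complex_hilbert \<Rightarrow> 'a"
  assumes "bounded_op A" and "bounded_op B" and "bounded_op X"
    and "is_adjoint X Xs"
    and "A \<circ> X = X \<circ> A" and "A \<circ> Xs = Xs \<circ> A" and "A \<circ> B = B \<circ> A"
    and "X \<circ> Xs = Xs \<circ> X" and "X \<circ> B = B \<circ> X" and "Xs \<circ> B = B \<circ> Xs"
    and "positive_op A" and "invertible_op A"
    and "positive_op (block A X Xs B)"
    and "\<forall>x. A (B x) - Xs (X x) = 0"
  shows "op_sqrt (block A X Xs B) =
    block (inv (op_sqrt (\<lambda>x. A x + B x))) (\<lambda>_. 0) (\<lambda>_. 0) (inv (op_sqrt (\<lambda>x. A x + B x)))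
      \<circ> block A X Xs B"
proof -
  note bA = assms(1) and bB = assms(2) and bX = assms(3) and adj = assms(4)
  have bXs: "bounded_op Xs" using adj by (simp add: is_adjoint_def)
  have blA: "bounded_linear A" and blB: "bounded_linear B" and blX: "bounded_linear X" and blXs: "bounded_linear Xs"
    using bA bB bX bXs by (auto simp: bounded_op_def)
  have cAX: "A (X x) = X (A x)" for x using assms(5) by (metis comp_apply)
  have cAXs: "A (Xs x) = Xs (A x)" for x using assms(6) by (metis comp_apply)
  have cAB: "A (B x) = B (A x)" for x using assms(7) by (metis comp_apply)
  have cXXs: "X (Xs x) = Xs (X x)" for x using assms(8) by (metis comp_apply)
  have cXB: "X (B x) = B (X x)" for x using assms(9) by (metis comp_apply)
  have cXsB: "Xs (B x) = B (Xs x)" for x using assms(10) by (metis comp_apply)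
  have det: "Xs (X x) = A (B x)" for x using assms(14) by simp
  define M where "M = block A X Xs B"
  have pM: "positive_op M" using assms(13) by (simp add: M_def)
  have sM: "sa M" and nM: "\<And>z. 0 \<le> inner z (M z)" using pM by (auto simp: positive_op_iff)
  have sA: "sa A" and nA: "\<forall>x. 0 \<le> inner x (A x)" using assms(11) by (auto simp: positive_op_iff)
  have sB: "sa B"
    unfolding sa_def
  proof (intro allI)
    fix x y
    have "inner (M (0, x)) (0, y) = inner (0, x) (M (0, y))" using sM by (simp add: sa_def)
    then show "inner (B x) y = inner x (B y)"
      using blX blXs blA by (simp add: M_def block_apply inner_prod_def linear_simps)
  qed
  have nB: "0 \<le> inner x (B x)" for x
    using nM[of "(0, x)"] blX blXs blA by (simp add: M_def block_apply inner_prod_def linear_simps)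
  obtain Sinv where Sinv: "bounded_op Sinv" "Sinv \<circ> A = id"
    using assms(12) by (auto simp: invertible_op_def)
  obtain KS where KS: "KS > 0" "\<And>x. norm (Sinv x) \<le> norm x * KS"
    using bounded_linear.pos_bounded[of Sinv] Sinv(1) by (auto simp: bounded_op_def)
  obtain LA where LA: "LA > 0" "\<And>v. (norm (A v))\<^sup>2 \<le> LA * inner v (A v)"
    using cs_bound[OF blA sA nA] by blast
  define c where "c = 1 / (KS\<^sup>2 * LA)"
  have cpos: "c > 0" using KS LA by (simp add: c_def)
  have lowA: "c * (norm x)\<^sup>2 \<le> inner x (A x)" for x
  proof -
    have "x = Sinv (A x)" using Sinv(2) by (metis comp_apply id_apply)
    then have "norm x \<le> norm (A x) * KS" using KS(2)[of "A x"] by simp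
    then have "(norm x)\<^sup>2 \<le> (norm (A x) * KS)\<^sup>2" by (intro power_mono) auto
    also have "\<dots> = KS\<^sup>2 * (norm (A x))\<^sup>2" by (simp add: power_mult_distrib)
    also have "\<dots> \<le> KS\<^sup>2 * (LA * inner x (A x))" using LA(2)[of x] by (intro mult_left_mono) auto
    finally show ?thesis using KS LA by (simp add: c_def field_simps)
  qed
  define P where "P x = A x + B x" for x
  have blP: "bounded_linear P" unfolding P_def[abs_def] using blA blB by (rule bounded_linear_add)
  have bP: "bounded_op P"
    using blP bA bB by (simp add: bounded_op_def P_def cscale_add_right)
  have sP: "sa P" using sA sB by (simp add: sa_def P_def inner_add_left inner_add_right)
  have lowP: "c * (norm x)\<^sup>2 \<le> inner x (P x)" for x
    using lowA[of x] nB[of x] by (simp add: P_def inner_add_right)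
  interpret pi: posinv P c using bP sP cpos lowP by unfold_locales auto
  have sqP: "op_sqrt P = pi.pw (1/2)"
  proof (rule op_sqrt_eq)
    show "positive_op (pi.pw (1/2))" by (rule pi.pw_pos)
    show "pi.pw (1/2) \<circ> pi.pw (1/2) = P" by (rule ext) (simp add: pi.pw_comp pi.pw1)
  qed
  have invP: "inv (op_sqrt P) = pi.pw (-1/2)"
    unfolding sqP
    by (rule inv_unique_comp) (auto simp: fun_eq_iff pi.pw_comp pi.pw0)
  define N where "N = pi.pw (-1/2)"
  define W where "W = pi.pw (-1/4)"
  have WW: "W (W x) = N x" for x by (simp add: W_def N_def pi.pw_comp)
  have NN: "N (N (P x)) = x" for x by (simp add: N_def pi.pw_comp pi.pw1[symmetric] pi.pw0)
  have blN: "bounded_linear N" by (simp add: N_def pi.pw_bl)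
  have blW: "bounded_linear W" by (simp add: W_def pi.pw_bl)
  have commP: "\<And>C \<alpha> x. bounded_linear C \<Longrightarrow> (\<And>x. C (P x) = P (C x)) \<Longrightarrow> C (pi.pw \<alpha> x) = pi.pw \<alpha> (C x)"
    by (rule pi.pw_comm)
  have APc: "A (P x) = P (A x)" for x using blA by (simp add: P_def linear_simps cAB)
  have BPc: "B (P x) = P (B x)" for x using blB by (simp add: P_def linear_simps cAB)
  have XPc: "X (P x) = P (X x)" for x using blX by (simp add: P_def linear_simps cAX cXB)
  have XsPc: "Xs (P x) = P (Xs x)" for x using blXs by (simp add: P_def linear_simps cAXs cXsB)
  have NA: "N (A x) = A (N x)" for x unfolding N_def using commP[OF blA APc] by simp
  have NB: "N (B x) = B (N x)" for x unfolding N_def using commP[OF blB BPc] by simp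
  have NX: "N (X x) = X (N x)" for x unfolding N_def using commP[OF blX XPc] by simp
  have NXs: "N (Xs x) = Xs (N x)" for x unfolding N_def using commP[OF blXs XsPc] by simp
  have WA: "W (A x) = A (W x)" for x unfolding W_def using commP[OF blA APc] by simp
  have WB: "W (B x) = B (W x)" for x unfolding W_def using commP[OF blB BPc] by simp
  have WX: "W (X x) = X (W x)" for x unfolding W_def using commP[OF blX XPc] by simp
  have WXs: "W (Xs x) = Xs (W x)" for x unfolding W_def using commP[OF blXs XsPc] by simp
  define D where "D = block N (\<lambda>_. 0) (\<lambda>_. 0) N"
  define Wd where "Wd = block W (\<lambda>_. 0) (\<lambda>_. 0) W"
  define T where "T = D \<circ> M"
  have T_alt: "T z = Wd (M (Wd z))" for z
  proof (cases z)
    case (Pair x y)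
    have "Wd (M (Wd (x, y))) = (W (A (W x) + X (W y)), W (Xs (W x) + B (W y)))"
      by (simp add: Wd_def M_def block_apply)
    also have "\<dots> = (N (A x + X y), N (Xs x + B y))"
      using blW blA blX blXs blB blN by (simp add: linear_simps WA WX WXs WB WW NA NX NXs NB)
    also have "\<dots> = T (x, y)" by (simp add: T_def D_def M_def block_apply)
    finally show ?thesis using Pair by simp
  qed
  have TT: "T \<circ> T = M"
  proof (rule ext)
    fix z show "(T \<circ> T) z = M z"
    proof (cases z)
      case (Pair x y)
      have Tz: "T (x, y) = (N (A x + X y), N (Xs x + B y))" by (simp add: T_def D_def M_def block_apply)
      have "T (T (x, y)) = (N (A (N (A x + X y)) + X (N (Xs x + B y))), N (Xs (N (A x + X y)) + B (N (Xs x + B y))))"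
        unfolding Tz by (simp add: T_def D_def M_def block_apply)
      also have "\<dots> = (N (N (A (A x + X y) + X (Xs x + B y))), N (N (Xs (A x + X y) + B (Xs x + B y))))"
        using blN by (simp add: linear_simps NA NX NXs NB)
      also have "A (A x + X y) + X (Xs x + B y) = P (A x + X y)"
        using blA blB blX by (simp add: P_def linear_simps cXXs det cAB cXB)
      also have "Xs (A x + X y) + B (Xs x + B y) = P (Xs x + B y)"
        using blA blB blXs by (simp add: P_def linear_simps det cAXs cAB)
      finally show ?thesis using Pair by (simp add: NN M_def block_apply)
    qed
  qed
  have bW: "bounded_op W" by (simp add: W_def pi.pw_bop)
  have bWd: "bounded_op Wd" unfolding Wd_def by (intro bop_block bW bop_zero)
  have bM: "bounded_op M" using pM by (simp add: positive_op_def)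
  have sWd: "sa Wd" unfolding Wd_def W_def by (intro sa_diag pi.pw_sa)
  have pT: "positive_op T"
    unfolding positive_op_iff
  proof (intro conjI allI)
    have "T = (\<lambda>z. Wd (M (Wd z)))" by (rule ext) (rule T_alt)
    then show "bounded_op T" using bop_comp[OF bWd bop_comp[OF bM bWd]] by simp
    show "sa T"
      unfolding sa_def T_alt
    proof (intro allI)
      fix z w
      have "inner (Wd (M (Wd z))) w = inner (M (Wd z)) (Wd w)" using sWd unfolding sa_def by blast
      also have "\<dots> = inner (Wd z) (M (Wd w))" using sM unfolding sa_def by blast
      also have "\<dots> = inner z (Wd (M (Wd w)))" using sWd unfolding sa_def by blast
      finally show "inner (Wd (M (Wd z))) w = inner z (Wd (M (Wd w)))" .
    qed
    fix z
    have "inner z (T z) = inner (Wd z) (M (Wd z))" using sWd unfolding T_alt sa_def by (metis inner_commute)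
    then show "0 \<le> inner z (T z)" using nM by simp
  qed
  have "op_sqrt M = T" by (rule op_sqrt_eq[OF pT TT])
  moreover have "(\<lambda>x. A x + B x) = P" by (simp add: P_def fun_eq_iff)
  ultimately show ?thesis by (simp add: T_def D_def N_def invP M_def)
qed

end
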